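(* Let $n\ge2$ and let $(x_j)_{j\in J}$ be a finite frame of $\mathbb C^n$. Suppose that $x,y\in\mathbb C^n$ are linearly independent and that $\langle x,x_j\rangle$ and $\langle y,x_j\rangle$ are real for all $j\in J$. Then there exists $z\in\operatorname{span}\{x,y\}$ such that $(x_j)_{j\in J}$ does not do stable phase retrieval near $z$.
   Context: A finite frame $(x_j)_{j\in J}$ of $\mathbb C^n$ satisfies $A\|x\|^2\le\sum_{j}|\langle x,x_j\rangle|^2\le B\|x\|^2$ for some $B\ge A>0$; its analysis operator is $\Theta(x)=(\langle x,x_j\rangle)_{j\in J}$ and $|\Theta x|=(|\langle x,x_j\rangle|)_{j\in J}$. For $x,y$ with $x\neq\lambda y$ for all $|\lambda|=1$, set $\Psi(x,y)=\||\Theta x|-|\Theta y|\|/\min_{|\lambda|=1}\|x-\lambda y\|$. For $C>0$, the frame does $C$-stable phase retrieval near $z$ if $\liminf_{w\to z,\ w\notin\{\lambda z:|\lambda|=1\}} C\,\Psi(z,w)\ge1$, and does stable phase retrieval near $z$ if this holds for some $C>0$. *)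

theory Defs
  imports "HOL-Analysis.Analysis"
begin

definition cinner :: "complex ^ 'n \<Rightarrow> complex ^ 'n \<Rightarrow> complex" where
  "cinner x y = (\<Sum>i\<in>UNIV. x $ i * cnj (y $ i))"

definition finite_frame :: "'j set \<Rightarrow> ('j \<Rightarrow> complex ^ 'n) \<Rightarrow> bool" where
  "finite_frame J X \<longleftrightarrow> finite J \<and>
     (\<exists>A B. 0 < A \<and> A \<le> B \<and>
        (\<forall>x. A * (norm x)\<^sup>2 \<le> (\<Sum>j\<in>J. (cmod (cinner x (X j)))\<^sup>2) \<and>
             (\<Sum>j\<in>J. (cmod (cinner x (X j)))\<^sup>2) \<le> B * (norm x)\<^sup>2))"

definition Psi :: "'j set \<Rightarrow> ('j \<Rightarrow> complex ^ 'n) \<Rightarrow> complex ^ 'n \<Rightarrow> complex ^ 'n \<Rightarrow> real" where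
  "Psi J X x y =
     sqrt (\<Sum>j\<in>J. (cmod (cinner x (X j)) - cmod (cinner y (X j)))\<^sup>2)
     / Inf {norm (x - u *s y) | u. cmod u = 1}"

definition C_stable_pr_near :: "'j set \<Rightarrow> ('j \<Rightarrow> complex ^ 'n) \<Rightarrow> real \<Rightarrow> complex ^ 'n \<Rightarrow> bool" where
  "C_stable_pr_near J X C z \<longleftrightarrow>
     Liminf (at z within - {u *s z | u. cmod u = 1}) (\<lambda>w. ereal (C * Psi J X z w)) \<ge> 1"

definition stable_pr_near :: "'j set \<Rightarrow> ('j \<Rightarrow> complex ^ 'n) \<Rightarrow> complex ^ 'n \<Rightarrow> bool" where
  "stable_pr_near J X z \<longleftrightarrow> (\<exists>C>0. C_stable_pr_near J X C z)"

end

theory Submission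
  imports Defs
begin

lemma norm_smult_c: "norm (c *s (v::complex^'n)) = cmod c * norm v"
  unfolding norm_vec_def by (simp add: L2_set_right_distrib norm_mult)

lemma cinner_add: "cinner (p + q) v = cinner p v + cinner q v"
  unfolding cinner_def by (simp add: sum.distrib algebra_simps)

lemma cinner_smult: "cinner (c *s p) v = c * cinner p v"
  unfolding cinner_def by (simp add: sum_distrib_left algebra_simps)

lemma key_ineq:
  fixes c b t :: real
  assumes "t > 0" "b \<noteq> 0 \<longrightarrow> c \<noteq> 0"
  shows "(\<bar>c\<bar> - sqrt (c^2 + (t*b)^2))^2 \<le> t^4 * (if b = 0 then 0 else (b^2/\<bar>c\<bar>)^2)"
proof (cases "b = 0")
  case True then show ?thesis by simp
next
  case False
  then have c: "c \<noteq> 0" using assms by auto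
  define r where "r = sqrt (c^2 + (t*b)^2)"
  have r0: "r \<ge> \<bar>c\<bar>" unfolding r_def by (simp add: real_le_rsqrt)
  have rr: "r^2 = c^2 + (t*b)^2" unfolding r_def by simp
  have "r - \<bar>c\<bar> = (t*b)^2 / (r + \<bar>c\<bar>)"
    using c r0 rr by (simp add: field_simps power2_eq_square)
  also have "\<dots> \<le> (t*b)^2 / \<bar>c\<bar>"
    using c r0 by (intro divide_left_mono) auto
  finally have h: "r - \<bar>c\<bar> \<le> t^2 * (b^2/\<bar>c\<bar>)" by (simp add: power_mult_distrib)
  have "(\<bar>c\<bar> - r)^2 = (r - \<bar>c\<bar>)^2" by (simp add: power2_commute)
  also have "\<dots> \<le> (t^2 * (b^2/\<bar>c\<bar>))^2"
    using h r0 by (intro power_mono) auto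
  also have "\<dots> = t^4 * (b^2/\<bar>c\<bar>)^2" by (simp add: power_divide power_mult_distrib flip: power_mult)
  finally show ?thesis using False by (simp add: r_def)
qed

theorem theorem4p3:
  fixes J :: "'j set" and X :: "'j \<Rightarrow> complex ^ 'n" and x y :: "complex ^ 'n"
  assumes "CARD('n) \<ge> 2"
    and "finite_frame J X"
    and "\<forall>a b. a *s x + b *s y = 0 \<longrightarrow> a = 0 \<and> b = 0"
    and "\<forall>j\<in>J. cinner x (X j) \<in> \<real> \<and> cinner y (X j) \<in> \<real>"
  shows "\<exists>z. (\<exists>a b. z = a *s x + b *s y) \<and> \<not> stable_pr_near J X z"
proof -
  have fin: "finite J" using assms(2) unfolding finite_frame_def by blast
  have indep: "\<And>a b. a *s x + b *s y = 0 \<Longrightarrow> a = 0 \<and> b = 0" using assms(3) by blast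
  define a where "a j = Re (cinner x (X j))" for j
  define b where "b j = Re (cinner y (X j))" for j
  have ax: "cinner x (X j) = of_real (a j)" if "j \<in> J" for j
    using assms(4) that unfolding a_def by (simp add: of_real_Re)
  have bx: "cinner y (X j) = of_real (b j)" if "j \<in> J" for j
    using assms(4) that unfolding b_def by (simp add: of_real_Re)
  have "finite ((\<lambda>j. - a j / b j) ` J)" using fin by simp
  then obtain s :: real where s: "s \<notin> (\<lambda>j. - a j / b j) ` J"
    by (meson ex_new_if_finite infinite_UNIV_char_0 UNIV_I finite_subset subsetI)
  define c where "c j = a j + s * b j" for j
  have cnz: "b j \<noteq> 0 \<longrightarrow> c j \<noteq> 0" if "j \<in> J" for j
  proof
    assume "b j \<noteq> 0"
    show "c j \<noteq> 0"
    proof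
      assume "c j = 0"
      then have "s = - a j / b j" using \<open>b j \<noteq> 0\<close> unfolding c_def by (simp add: field_simps)
      then show False using s that by auto
    qed
  qed
  define z where "z = x + complex_of_real s *s y"
  define tt where "tt m = inverse (real (Suc m))" for m
  define w where "w m = z + (\<i> * complex_of_real (tt m)) *s y" for m
  have tt_pos: "tt m > 0" for m unfolding tt_def by simp
  have cz: "cinner z (X j) = of_real (c j)" if "j \<in> J" for j
    using that by (simp add: z_def cinner_add cinner_smult ax bx c_def)
  have cw: "cinner (w m) (X j) = Complex (c j) (tt m * b j)" if "j \<in> J" for j m
    using that by (simp add: w_def cz cinner_add cinner_smult bx complex_eq_iff)
  define K where "K = (\<Sum>j\<in>J. (if b j = 0 then 0 else (b j^2/\<bar>c j\<bar>)^2))"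
  have K0: "K \<ge> 0" unfolding K_def by (intro sum_nonneg) auto
  define num where "num m = sqrt (\<Sum>j\<in>J. (cmod (cinner z (X j)) - cmod (cinner (w m) (X j)))\<^sup>2)" for m
  have num0: "num m \<ge> 0" for m unfolding num_def by (intro real_sqrt_ge_zero sum_nonneg) auto
  have numb: "num m \<le> tt m ^ 2 * sqrt K" for m
  proof -
    have "(\<Sum>j\<in>J. (cmod (cinner z (X j)) - cmod (cinner (w m) (X j)))\<^sup>2)
        \<le> (\<Sum>j\<in>J. tt m ^ 4 * (if b j = 0 then 0 else (b j^2/\<bar>c j\<bar>)^2))"
    proof (rule sum_mono)
      fix j assume j: "j \<in> J"
      show "(cmod (cinner z (X j)) - cmod (cinner (w m) (X j)))\<^sup>2
        \<le> tt m ^ 4 * (if b j = 0 then 0 else (b j^2/\<bar>c j\<bar>)^2)"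
        using key_ineq[OF tt_pos cnz[OF j]] j by (simp add: cz cw complex_norm)
    qed
    also have "\<dots> = (tt m ^ 2)^2 * K" by (simp add: K_def sum_distrib_left flip: power_mult)
    finally have "num m \<le> sqrt ((tt m ^ 2)^2 * K)" unfolding num_def by simp
    also have "\<dots> = tt m ^ 2 * sqrt K" by (subst real_sqrt_mult) (simp only: real_sqrt_abs abs_power2)
    finally show ?thesis .
  qed
  define L where "L = range (\<lambda>c. c *s z)"
  have subL: "subspace L"
    unfolding subspace_def L_def
  proof (intro conjI ballI allI)
    show "0 \<in> range (\<lambda>c. c *s z)" by (rule range_eqI[where x=0]) simp
  next
    fix p q assume "p \<in> range (\<lambda>c. c *s z)" "q \<in> range (\<lambda>c. c *s z)"
    then obtain c1 c2 where "p = c1 *s z" "q = c2 *s z" by auto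
    then show "p + q \<in> range (\<lambda>c. c *s z)"
      by (intro range_eqI[where x="c1 + c2"]) (simp add: vector_sadd_rdistrib)
  next
    fix r :: real and p assume "p \<in> range (\<lambda>c. c *s z)"
    then obtain c1 where "p = c1 *s z" by auto
    then show "r *\<^sub>R p \<in> range (\<lambda>c. c *s z)"
      by (intro range_eqI[where x="of_real r * c1"]) (simp add: vec_eq_iff, simp add: scaleR_conv_of_real)
  qed
  have yL: "y \<notin> L"
  proof
    assume "y \<in> L"
    then obtain c1 where h: "y = c1 *s z" unfolding L_def by auto
    have "c1 *s x + (c1 * complex_of_real s - 1) *s y = 0"
    proof -
      have "\<forall>i. y $ i = c1 * (x $ i + complex_of_real s * y $ i)"
        using h unfolding z_def vec_eq_iff by (simp add: algebra_simps)
      then show ?thesis by (simp add: vec_eq_iff algebra_simps)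
    qed
    from indep[OF this] show False by auto
  qed
  define \<delta> where "\<delta> = infdist y L"
  have dpos: "\<delta> > 0"
  proof -
    have "L \<noteq> {}" unfolding L_def by simp
    moreover have "closure L = L" using closed_subspace[OF subL] by simp
    ultimately have "\<delta> \<noteq> 0" using yL in_closure_iff_infdist_zero[of L y] unfolding \<delta>_def by simp
    moreover have "\<delta> \<ge> 0" unfolding \<delta>_def by (rule infdist_nonneg)
    ultimately show ?thesis by simp
  qed
  have den: "norm (z - u *s w m) \<ge> tt m * \<delta>" if u: "cmod u = 1" for u m
  proof -
    have u0: "u \<noteq> 0" using u by auto
    have t0: "complex_of_real (tt m) \<noteq> 0" using tt_pos[of m] by simp
    define c1 where "c1 = (1 - u) / (u * \<i> * complex_of_real (tt m))"
    have eq: "z - u *s w m = - (u * \<i> * complex_of_real (tt m)) *s (y - c1 *s z)"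
      using u0 t0 by (simp add: vec_eq_iff w_def c1_def field_simps)
    have "norm (z - u *s w m) = tt m * norm (y - c1 *s z)"
      unfolding eq norm_smult_c using u tt_pos[of m] by (simp add: norm_mult)
    moreover have "\<delta> \<le> norm (y - c1 *s z)"
    proof -
      have "c1 *s z \<in> L" unfolding L_def by (rule rangeI)
      from infdist_le[OF this, of y] show ?thesis unfolding \<delta>_def by (simp add: dist_norm)
    qed
    ultimately show ?thesis using tt_pos[of m] by simp
  qed
  have Psib: "Psi J X z (w m) \<le> tt m * sqrt K / \<delta>" for m
  proof -
    have ne: "{norm (z - u *s w m) | u. cmod u = 1} \<noteq> {}" by (auto intro: exI[of _ 1])
    have "tt m * \<delta> \<le> Inf {norm (z - u *s w m) | u. cmod u = 1}"
      by (rule cInf_greatest[OF ne]) (auto intro: den)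
    then have "Psi J X z (w m) \<le> (tt m ^ 2 * sqrt K) / (tt m * \<delta>)"
      unfolding Psi_def num_def[symmetric]
      by (intro frac_le numb num0) (use tt_pos[of m] dpos K0 in auto)
    also have "\<dots> = tt m * sqrt K / \<delta>" using tt_pos[of m] by (simp add: power2_eq_square)
    finally show ?thesis .
  qed
  have notorb: "w m \<in> - {u *s z | u. cmod u = 1} - {z}" for m
  proof -
    have nu: "w m \<noteq> u *s z" for u
    proof
      assume h: "w m = u *s z"
      have "(1 - u) *s x + (complex_of_real s + \<i> * complex_of_real (tt m) - u * complex_of_real s) *s y = 0"
      proof -
        have "\<forall>i. x $ i + complex_of_real s * y $ i + \<i> * complex_of_real (tt m) * y $ i
             = u * (x $ i + complex_of_real s * y $ i)"
          using h unfolding w_def z_def vec_eq_iff by (simp add: algebra_simps)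
        then show ?thesis by (simp add: vec_eq_iff algebra_simps)
      qed
      from indep[OF this] have "u = 1" "complex_of_real s + \<i> * complex_of_real (tt m) - u * complex_of_real s = 0" by auto
      then have "\<i> * complex_of_real (tt m) = 0" by simp
      then show False using tt_pos[of m] by simp
    qed
    moreover have "w m \<noteq> z" using nu[of 1] by simp
    ultimately show ?thesis by auto
  qed
  have wlim: "w \<longlonglongrightarrow> z"
  proof -
    have e: "w m = z + tt m *\<^sub>R (\<i> *s y)" for m
      by (simp add: w_def vec_eq_iff, simp add: scaleR_conv_of_real)
    have "(\<lambda>m. tt m) \<longlonglongrightarrow> 0" unfolding tt_def by (rule LIMSEQ_inverse_real_of_nat)
    then have "(\<lambda>m. z + tt m *\<^sub>R (\<i> *s y)) \<longlonglongrightarrow> z + 0 *\<^sub>R (\<i> *s y)"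
      by (intro tendsto_intros)
    then show ?thesis unfolding e[abs_def] by simp
  qed
  have "\<not> stable_pr_near J X z"
  proof
    assume "stable_pr_near J X z"
    then obtain C where C: "C > 0" "C_stable_pr_near J X C z" unfolding stable_pr_near_def by blast
    let ?S = "- {u *s z | u. cmod u = 1}"
    have ev: "eventually (\<lambda>v. ereal (1/2) < ereal (C * Psi J X z v)) (at z within ?S)"
    proof -
      have "\<forall>y<ereal 1. \<forall>\<^sub>F v in at z within ?S. y < ereal (C * Psi J X z v)"
        using C(2) unfolding C_stable_pr_near_def le_Liminf_iff by (simp add: one_ereal_def)
      then show ?thesis by (meson ereal_less(2) less_divide_eq_1_pos zero_less_numeral one_less_numeral_iff semiring_norm(76) ereal_less_ereal_Ex divide_less_eq_1 order_less_irrefl half_gt_zero_iff le_less_trans less_numeral_extra(1) field_sum_of_halves)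
    qed
    have fl: "filterlim w (at z within ?S) sequentially"
      by (intro filterlim_at_withinI wlim) (use notorb in auto)
    have "eventually (\<lambda>m. ereal (1/2) < ereal (C * Psi J X z (w m))) sequentially"
      using fl[unfolded filterlim_iff, rule_format, OF ev] .
    then obtain N where N: "\<And>m. m \<ge> N \<Longrightarrow> 1/2 < C * Psi J X z (w m)"
      unfolding eventually_sequentially by auto
    obtain n :: nat where n: "2 * C * sqrt K / \<delta> < real n" using reals_Archimedean2 by blast
    define m where "m = max N n"
    have h1: "1/2 < C * Psi J X z (w m)" using N m_def by simp
    have h2: "C * Psi J X z (w m) \<le> C * (tt m * sqrt K / \<delta>)" using Psib C(1) by (intro mult_left_mono) auto
    have h3: "C * (tt m * sqrt K / \<delta>) = (C * sqrt K / \<delta>) / real (Suc m)" by (simp add: tt_def field_simps)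
    have h4: "(C * sqrt K / \<delta>) / real (Suc m) < 1/2"
    proof -
      have "real n \<le> real (Suc m)" unfolding m_def by simp
      then have "2 * C * sqrt K / \<delta> < real (Suc m)" using n by linarith
      then have "C * sqrt K / \<delta> < 1/2 * real (Suc m)" by (simp add: mult.commute mult.left_commute)
      then show ?thesis by (subst pos_divide_less_eq) auto
    qed
    show False using h1 h2 h3 h4 by linarith
  qed
  moreover have "z = 1 *s x + complex_of_real s *s y" unfolding z_def by simp
  ultimately show ?thesis by blast
qed
end
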